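(* Let $P$ be a point of $\mathrm{PG}(2,q^3)$ with $P\neq T$, $P$ not on the line $m_T$ and $P\notin\mathcal P_{2,q}$. Then $P$ lies in the Fig-block $\mathrm{Fig}(T)$ if and only if the projection of $\mathcal P_{2,q}$ from $P$ onto $m_T$, i.e. $\{PQ\cap m_T:Q\in\mathcal P_{2,q}\}$, is a $T$-sls (that is, one of the sets $\mathcal S_\theta=\{(x\theta,x^q,0):x\in\mathbb{F}_{q^3}^*\}$, $\theta\in\mathbb{F}_{q^3}^*$; equivalently a scattered $\mathbb{F}_q$-linear set of pseudoregulus type with transversal points $T^\phi$, $T^{\phi^2}$).
   Context: Let $q$ be a prime power, $\mathbb{F}_{q^3}^*=\mathbb{F}_{q^3}\setminus\{0\}$. Points of $\mathrm{PG}(2,q^3)$ have homogeneous coordinates $(x,y,z)$ and lines $[a,b,c]$. Let $\phi$ be the collineation $(x,y,z)\mapsto(z^q,x^q,y^q)$ (on lines $[d,e,f]\mapsto[f^q,d^q,e^q]$), whose fixed points form the subplane $\mathcal P_{2,q}=\{(x,x^q,x^{q^2}):x\in\mathbb{F}_{q^3}^*\}$. A point has Type II (resp. III) if its $\phi$-orbit is three collinear (resp. non-collinear) points; a line has Type III if its $\phi$-orbit is three non-concurrent lines. For a Type III point $X$, the Fig-block is $\mathrm{Fig}(X)=\mathcal E_X\cup\mathcal F_X$, where $\mathcal E_X$ is the set of Type II points on the line $X^\phi X^{\phi^2}$ and $\mathcal F_X=\{\ell^\phi\cap\ell^{\phi^2}:\ell\text{ a Type III line through }X\}$. Let $T=(0,0,1)$,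 $T^\phi=(1,0,0)$, $T^{\phi^2}=(0,1,0)$, and $m_T=T^\phi T^{\phi^2}$ the line $[0,0,1]$. *)

theory Defs
  imports "HOL-Computational_Algebra.Primes"
begin

(* Homogeneous coordinates of PG(2,F) are nonzero triples in F^3.
   A projective point (or line) is represented by the class of all nonzero
   scalar multiples of a representative vector. *)

type_synonym 'a vec3 = "'a \<times> 'a \<times> 'a"

definition sm3 :: "'a::field \<Rightarrow> 'a vec3 \<Rightarrow> 'a vec3" where
  "sm3 c v = (case v of (x, y, z) \<Rightarrow> (c * x, c * y, c * z))"

definition pt :: "'a::field vec3 \<Rightarrow> 'a vec3 set" where
  "pt v = {w. \<exists>c. c \<noteq> 0 \<and> w = sm3 c v}"

definition dot3 :: "'a::field vec3 \<Rightarrow> 'a vec3 \<Rightarrow> 'a" where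
  "dot3 u v = (case u of (a, b, c) \<Rightarrow> case v of (x, y, z) \<Rightarrow> a * x + b * y + c * z)"

(* cross product: line through two points / intersection point of two lines *)
definition cross3 :: "'a::field vec3 \<Rightarrow> 'a vec3 \<Rightarrow> 'a vec3" where
  "cross3 u v = (case u of (a, b, c) \<Rightarrow> case v of (d, e, f) \<Rightarrow>
      (b * f - c * e, c * d - a * f, a * e - b * d))"

definition det3 :: "'a::field vec3 \<Rightarrow> 'a vec3 \<Rightarrow> 'a vec3 \<Rightarrow> 'a" where
  "det3 u v w = dot3 u (cross3 v w)"

(* the collineation phi: (x,y,z) |-> (z^q, x^q, y^q); on lines the same formula *)
definition phi :: "nat \<Rightarrow> 'a::field vec3 \<Rightarrow> 'a vec3" where
  "phi q v = (case v of (x, y, z) \<Rightarrow> (z ^ q, x ^ q, y ^ q))"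

definition typeII_pt :: "nat \<Rightarrow> 'a::field vec3 \<Rightarrow> bool" where
  "typeII_pt q v \<longleftrightarrow> v \<noteq> (0, 0, 0) \<and>
     pt v \<noteq> pt (phi q v) \<and> pt v \<noteq> pt (phi q (phi q v)) \<and>
     pt (phi q v) \<noteq> pt (phi q (phi q v)) \<and>
     det3 v (phi q v) (phi q (phi q v)) = 0"

definition typeIII_pt :: "nat \<Rightarrow> 'a::field vec3 \<Rightarrow> bool" where
  "typeIII_pt q v \<longleftrightarrow> v \<noteq> (0, 0, 0) \<and> det3 v (phi q v) (phi q (phi q v)) \<noteq> 0"

definition typeIII_line :: "nat \<Rightarrow> 'a::field vec3 \<Rightarrow> bool" where
  "typeIII_line q l \<longleftrightarrow> l \<noteq> (0, 0, 0) \<and> det3 l (phi q l) (phi q (phi q l)) \<noteq> 0"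

(* the subplane P_{2,q} of phi-fixed points *)
definition subplane :: "nat \<Rightarrow> 'a::field vec3 set set" where
  "subplane q = {pt (x, x ^ q, x ^ (q ^ 2)) | x. x \<noteq> 0}"

definition E_blk :: "nat \<Rightarrow> 'a::field vec3 \<Rightarrow> 'a vec3 set set" where
  "E_blk q X = {pt w | w. typeII_pt q w \<and>
                  dot3 (cross3 (phi q X) (phi q (phi q X))) w = 0}"

definition F_blk :: "nat \<Rightarrow> 'a::field vec3 \<Rightarrow> 'a vec3 set set" where
  "F_blk q X = {pt (cross3 (phi q l) (phi q (phi q l))) | l.
                  typeIII_line q l \<and> dot3 l X = 0}"

definition Fig :: "nat \<Rightarrow> 'a::field vec3 \<Rightarrow> 'a vec3 set set" where
  "Fig q X = E_blk q X \<union> F_blk q X"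

definition Tpt :: "'a::field vec3" where
  "Tpt = (0, 0, 1)"

definition mT :: "'a::field vec3" where
  "mT = (0, 0, 1)"

definition proj_set :: "nat \<Rightarrow> 'a::field vec3 \<Rightarrow> 'a vec3 set set" where
  "proj_set q P = {pt (cross3 (cross3 P Q) mT) | Q. Q \<noteq> (0, 0, 0) \<and> pt Q \<in> subplane q}"

definition S_theta :: "nat \<Rightarrow> 'a::field \<Rightarrow> 'a vec3 set set" where
  "S_theta q \<theta> = {pt (x * \<theta>, x ^ q, 0) | x. x \<noteq> 0}"

definition T_sls :: "nat \<Rightarrow> 'a::field vec3 set set \<Rightarrow> bool" where
  "T_sls q S \<longleftrightarrow> (\<exists>\<theta>. \<theta> \<noteq> 0 \<and> S = S_theta q \<theta>)"

end

theory Submission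
  imports Defs "HOL-Computational_Algebra.Polynomial"
begin

lemma ff_card_zero:
  "of_nat (card (UNIV :: 'a::{finite,field} set)) = (0::'a)"
proof -
  have "(\<Sum>x\<in>(UNIV::'a set). x) = (\<Sum>x\<in>UNIV. x + 1)"
    by (rule sum.reindex_bij_witness[of _ "\<lambda>y. y + 1" "\<lambda>y. y - 1"]) auto
  also have "\<dots> = (\<Sum>x\<in>UNIV. x) + of_nat (card (UNIV::'a set))"
    by (simp add: sum.distrib)
  finally show ?thesis by simp
qed

lemma frob_prime:
  fixes a b :: "'a::comm_ring_1"
  assumes "prime p" "of_nat p = (0::'a)"
  shows "(a + b) ^ p = a ^ p + b ^ p"
proof -
  have p0: "p > 0" using assms prime_gt_0_nat by blast
  have "(a + b) ^ p = (\<Sum>k\<le>p. of_nat (p choose k) * a ^ k * b ^ (p - k))"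
    by (rule binomial_ring)
  also have "\<dots> = (\<Sum>k\<in>{0,p}. of_nat (p choose k) * a ^ k * b ^ (p - k))"
  proof (rule sum.mono_neutral_right)
    show "\<forall>i\<in>{..p} - {0, p}. of_nat (p choose i) * a ^ i * b ^ (p - i) = 0"
    proof
      fix i assume i: "i \<in> {..p} - {0, p}"
      then have "p dvd (p choose i)" using dvd_choose_prime[of i p] assms(1) by auto
      then obtain m where "p choose i = p * m" by auto
      then have "(of_nat (p choose i) :: 'a) = 0" using assms(2) by simp
      then show "of_nat (p choose i) * a ^ i * b ^ (p - i) = 0" by simp
    qed
  qed auto
  also have "\<dots> = a ^ p + b ^ p" using p0 by (simp add: add.commute)
  finally show ?thesis .
qed

lemma frob_ppow:
  fixes a b :: "'a::comm_ring_1"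
  assumes "prime p" "of_nat p = (0::'a)"
  shows "(a + b) ^ (p ^ k) = a ^ (p ^ k) + b ^ (p ^ k)"
proof (induction k)
  case 0 then show ?case by simp
next
  case (Suc k)
  have "(a + b) ^ (p ^ Suc k) = ((a + b) ^ (p ^ k)) ^ p"
    by (simp add: power_mult[symmetric] mult.commute)
  also have "\<dots> = (a ^ (p ^ k)) ^ p + (b ^ (p ^ k)) ^ p"
    using Suc frob_prime[OF assms] by simp
  also have "\<dots> = a ^ (p ^ Suc k) + b ^ (p ^ Suc k)"
    by (simp add: power_mult[symmetric] mult.commute)
  finally show ?case .
qed

lemma ff_pow_card:
  fixes x :: "'a::{finite,field}"
  shows "x ^ card (UNIV :: 'a set) = x"
proof (cases "x = 0")
  case False
  have "x * (\<Prod>y\<in>UNIV-{0}. x * y) = x * x ^ (card (UNIV :: 'a set) - 1) * \<Prod>(UNIV-{0})"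
    by (simp add: prod.distrib mult_ac)
  also have "x * x ^ (card (UNIV :: 'a set) - 1) = x ^ Suc (card (UNIV :: 'a set) - 1)"
    by (subst power_Suc) auto
  also have "Suc (card (UNIV :: 'a set) - 1) = card (UNIV :: 'a set)"
    using finite_UNIV_card_ge_0[where ?'a = 'a] by simp
  also have "(\<Prod>y\<in>UNIV-{0}. x * y) = (\<Prod>y\<in>UNIV-{0}. y)"
    by (rule prod.reindex_bij_witness[of _ "\<lambda>y. y / x" "\<lambda>y. x * y"]) (use False in auto)
  finally show ?thesis
    by simp
qed (use finite_UNIV_card_ge_0[where ?'a = 'a] in auto)

lemma sm3_simp[simp]: "sm3 c (x, y, z) = (c * x, c * y, c * z)"
  by (simp add: sm3_def)

lemma pt_self: "v \<in> pt (v::'a::field vec3)"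
  unfolding pt_def by (rule CollectI, rule exI[of _ 1]) (cases v, auto)

lemma pt_eqD: "pt u = pt (v::'a::field vec3) \<Longrightarrow> \<exists>c. c \<noteq> 0 \<and> u = sm3 c v"
  using pt_self[of u] unfolding pt_def by auto

lemma pt_eqI:
  assumes "c \<noteq> 0" "u = sm3 c (v::'a::field vec3)" shows "pt u = pt v"
proof -
  obtain a b d where v: "v = (a, b, d)" by (cases v)
  show ?thesis
  proof (rule set_eqI)
    fix w
    show "w \<in> pt u \<longleftrightarrow> w \<in> pt v"
    proof
      assume "w \<in> pt u"
      then obtain c' where "c' \<noteq> 0" "w = sm3 c' u" unfolding pt_def by auto
      then show "w \<in> pt v" unfolding pt_def using assms v
        by (auto intro!: exI[of _ "c' * c"] simp: mult.assoc)
    next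
      assume "w \<in> pt v"
      then obtain c' where "c' \<noteq> 0" "w = sm3 c' v" unfolding pt_def by auto
      then show "w \<in> pt u" unfolding pt_def using assms v
        by (auto intro!: exI[of _ "c' / c"] simp: mult.assoc)
    qed
  qed
qed

definition nrm :: "nat \<Rightarrow> 'a::field \<Rightarrow> 'a" where
  "nrm q a = a * a ^ q * (a ^ q) ^ q"

context
  fixes q :: nat
  assumes q2: "q \<ge> 2"
    and fadd: "\<And>a b::'a::{finite,field}. (a + b) ^ q = a ^ q + b ^ q"
    and pw3: "\<And>a::'a. ((a ^ q) ^ q) ^ q = a"
    and crd: "card (UNIV::'a set) = q ^ 3"
begin

lemma q0: "q > 0" using q2 by simp

lemma fneg: "(- a :: 'a) ^ q = - (a ^ q)"
proof -
  have "a ^ q + (- a) ^ q = (a + - a) ^ q" by (simp only: fadd)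
  also have "\<dots> = 0" using q0 by simp
  finally show ?thesis by (simp add: eq_neg_iff_add_eq_0 add.commute)
qed

lemma fdiff: "(a - b :: 'a) ^ q = a ^ q - b ^ q"
  using fadd[of a "- b"] fneg[of b] by simp

lemma fzero[simp]: "(0::'a) ^ q = 0" using q0 by simp

lemma pow_sq: "(a::'a) ^ (q ^ 2) = (a ^ q) ^ q"
  by (simp add: power2_eq_square power_mult)

lemmas fr_simps = fadd fneg fdiff pw3 power_mult_distrib power_divide pow_sq

lemma nrm_mult: "nrm q (a * b :: 'a) = nrm q a * nrm q b"
  by (simp add: nrm_def power_mult_distrib mult_ac)

lemma nrm_frob: "nrm q ((a::'a) ^ q) = nrm q a"
  by (simp add: nrm_def pw3 mult_ac)

lemma nrm_neg: "nrm q (- a::'a) = - nrm q a"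
  by (simp add: nrm_def fneg)

lemma nrm_one[simp]: "nrm q (1::'a) = 1"
  by (simp add: nrm_def)

lemma nrm_zero_iff: "nrm q (a::'a) = 0 \<longleftrightarrow> a = 0"
  using q0 by (simp add: nrm_def)

lemma nrm_pow: "nrm q (a::'a) = a ^ (q * q + q + 1)"
  by (simp add: nrm_def power_add power_mult mult_ac)

definition CC :: "'a set" where
  "CC = {t ^ (q - 1) | t. t \<noteq> 0}"

lemma C_norm:
  assumes "c \<in> CC" shows "nrm q c = 1"
proof -
  obtain t where t: "t \<noteq> 0" "c = t ^ (q - 1)" using assms unfolding CC_def by auto
  have tq: "t ^ q = t * c"
    using q0 t by (simp add: power_Suc[symmetric])
  have "(t ^ q) ^ q = t * c * c ^ q" by (simp add: tq power_mult_distrib)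
  then have "((t ^ q) ^ q) ^ q = t * c * c ^ q * (c ^ q) ^ q"
    by (simp add: tq power_mult_distrib)
  then have "t * 1 = t * (c * c ^ q * (c ^ q) ^ q)" by (simp add: pw3 mult_ac)
  then have "c * c ^ q * (c ^ q) ^ q = 1" using t(1) by (metis mult_left_cancel)
  then show ?thesis unfolding nrm_def .
qed

lemma fiber_card: "card {t::'a. t ^ (q - 1) = c} \<le> q - 1"
proof -
  let ?p = "monom (1::'a) (q - 1) - monom c 0"
  have "coeff ?p (q - 1) = 1" using q2 by (simp add: coeff_monom)
  then have p0: "?p \<noteq> 0" by (metis coeff_0 zero_neq_one)
  have "{t::'a. t ^ (q - 1) = c} = {x. poly ?p x = 0}"
    by (simp add: poly_monom)
  also have "card \<dots> \<le> degree ?p" by (rule card_poly_roots_bound[OF p0])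
  also have "degree ?p \<le> q - 1"
    by (rule degree_le) (auto simp: coeff_monom)
  finally show ?thesis .
qed

lemma card_C: "q * q + q + 1 \<le> card CC"
proof -
  have "UNIV - {0::'a} = (\<Union>c\<in>CC. {t. t \<noteq> 0 \<and> t ^ (q - 1) = c})"
    unfolding CC_def by auto
  then have "card (UNIV - {0::'a}) = card (\<Union>c\<in>CC. {t::'a. t \<noteq> 0 \<and> t ^ (q - 1) = c})"
    by simp
  also have "\<dots> \<le> (\<Sum>c\<in>CC. card {t::'a. t \<noteq> 0 \<and> t ^ (q - 1) = c})"
    by (rule card_UN_le) simp
  also have "\<dots> \<le> (\<Sum>c\<in>CC. q - 1)"
  proof (rule sum_mono)
    fix c assume "c \<in> CC"
    have "card {t::'a. t \<noteq> 0 \<and> t ^ (q - 1) = c} \<le> card {t::'a. t ^ (q - 1) = c}"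
      by (rule card_mono) auto
    then show "card {t::'a. t \<noteq> 0 \<and> t ^ (q - 1) = c} \<le> q - 1" using fiber_card by (rule order.trans)
  qed
  also have "\<dots> = card CC * (q - 1)" by simp
  finally have "q ^ 3 - 1 \<le> card CC * (q - 1)" using crd by (simp add: card_Diff_singleton)
  moreover have "q ^ 3 - 1 = (q * q + q + 1) * (q - 1)"
  proof -
    have "int (q ^ 3 - 1) = int ((q * q + q + 1) * (q - 1))"
      using q2 by (simp add: of_nat_diff power3_eq_cube algebra_simps)
    then show ?thesis by (simp only: int_int_eq)
  qed
  ultimately have "(q * q + q + 1) * (q - 1) \<le> card CC * (q - 1)" by simp
  then show ?thesis using q2 by (subst (asm) mult_le_cancel2) simp
qed

lemma hilbert90:
  assumes "nrm q (c::'a) = 1" shows "c \<in> CC"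
proof -
  let ?n = "q * q + q + 1"
  let ?p = "monom (1::'a) ?n - monom 1 0"
  have "coeff ?p ?n = 1" by (simp add: coeff_monom)
  then have p0: "?p \<noteq> 0" by (metis coeff_0 zero_neq_one)
  have R: "{x::'a. x ^ ?n = 1} = {x. poly ?p x = 0}"
    by (simp add: poly_monom)
  have "card {x::'a. x ^ ?n = 1} \<le> degree ?p"
    unfolding R by (rule card_poly_roots_bound[OF p0])
  also have "degree ?p \<le> ?n"
    by (rule degree_le) (auto simp: coeff_monom)
  finally have c1: "card {x::'a. x ^ ?n = 1} \<le> card CC" using card_C by simp
  have sub: "CC \<subseteq> {x::'a. x ^ ?n = 1}" using C_norm nrm_pow by auto
  have "CC = {x::'a. x ^ ?n = 1}" by (rule card_seteq[OF finite sub c1])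
  then show ?thesis using assms nrm_pow by auto
qed

lemma poly7:
  assumes "\<And>c. c \<in> CC \<Longrightarrow> a0 + a1 * c + a2 * c ^ q + a3 * (c ^ q) ^ q + a4 * (c * c ^ q)
     + a5 * (c * (c ^ q) ^ q) + a6 * (c ^ q * (c ^ q) ^ q) = (0::'a)"
  shows "a0 = 0 \<and> a1 = 0 \<and> a2 = 0 \<and> a3 = 0 \<and> a4 = 0 \<and> a5 = 0 \<and> a6 = 0"
proof -
  define p where "p = monom a0 0 + monom a1 1 + monom a2 q + monom a3 (q * q) + monom a4 (1 + q)
     + monom a5 (1 + q * q) + monom a6 (q + q * q)"
  have ev: "poly p c = a0 + a1 * c + a2 * c ^ q + a3 * (c ^ q) ^ q + a4 * (c * c ^ q)
     + a5 * (c * (c ^ q) ^ q) + a6 * (c ^ q * (c ^ q) ^ q)" for c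
    by (simp add: p_def poly_monom power_add power_mult)
  have qq: "q * q \<ge> 2 * q" using q2 by simp
  have ne: "q \<noteq> 0" "q \<noteq> 1" "q * q \<noteq> 0" "q * q \<noteq> 1" "q * q \<noteq> q" "q * q \<noteq> 1 + q"
    "q \<noteq> 1 + q * q" "q \<noteq> q + q * q" "1 + q \<noteq> 1 + q * q" "1 + q \<noteq> q + q * q"
    "1 + q * q \<noteq> q + q * q" "q * q \<noteq> q + q * q" "1 \<noteq> q + q * q"
    using q2 qq by linarith+
  have deg: "degree p \<le> q + q * q"
    by (rule degree_le) (use q2 qq in \<open>auto simp: p_def coeff_monom\<close>)
  have "p = 0"
  proof (rule ccontr)
    assume "p \<noteq> 0"
    then have "card {x. poly p x = 0} \<le> degree p" by (rule card_poly_roots_bound)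
    moreover have "CC \<subseteq> {x. poly p x = 0}" using assms ev by auto
    then have "card CC \<le> card {x. poly p x = 0}" by (rule card_mono[OF finite])
    ultimately show False using card_C deg by linarith
  qed
  then have "coeff p 0 = 0" "coeff p 1 = 0" "coeff p q = 0" "coeff p (q * q) = 0"
    "coeff p (1 + q) = 0" "coeff p (1 + q * q) = 0" "coeff p (q + q * q) = 0" by simp_all
  then show ?thesis using ne
    by (simp add: p_def coeff_monom ne ne[symmetric])
qed

lemma projP: "proj_set q ((x::'a), y, 1) =
   {pt (t - x * (t ^ q) ^ q, t ^ q - y * (t ^ q) ^ q, 0) | t. t \<noteq> 0}"
proof (rule set_eqI)
  fix X
  show "X \<in> proj_set q (x, y, 1) \<longleftrightarrow> X \<in> {pt (t - x * (t ^ q) ^ q, t ^ q - y * (t ^ q) ^ q, 0) | t. t \<noteq> 0}"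
  proof
    assume "X \<in> proj_set q (x, y, 1)"
    then obtain Q where Q: "X = pt (cross3 (cross3 (x, y, 1) Q) mT)" "Q \<noteq> (0, 0, 0)" "pt Q \<in> subplane q"
      unfolding proj_set_def by auto
    then obtain t where t: "t \<noteq> 0" "pt Q = pt (t, t ^ q, t ^ (q ^ 2))" unfolding subplane_def by auto
    then obtain k where k: "k \<noteq> 0" "Q = sm3 k (t, t ^ q, t ^ (q ^ 2))" using pt_eqD by blast
    have "cross3 (cross3 (x, y, 1) Q) mT = sm3 k (t - x * (t ^ q) ^ q, t ^ q - y * (t ^ q) ^ q, 0)"
      using k by (simp add: cross3_def mT_def pow_sq algebra_simps)
    then have "pt (cross3 (cross3 (x, y, 1) Q) mT) = pt (t - x * (t ^ q) ^ q, t ^ q - y * (t ^ q) ^ q, 0)"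
      by (rule pt_eqI[OF k(1)])
    then have "X = pt (t - x * (t ^ q) ^ q, t ^ q - y * (t ^ q) ^ q, 0)"
      using Q(1) by simp
    then show "X \<in> {pt (t - x * (t ^ q) ^ q, t ^ q - y * (t ^ q) ^ q, 0) | t. t \<noteq> 0}" using t by auto
  next
    assume "X \<in> {pt (t - x * (t ^ q) ^ q, t ^ q - y * (t ^ q) ^ q, 0) | t. t \<noteq> 0}"
    then obtain t where t: "t \<noteq> 0" "X = pt (t - x * (t ^ q) ^ q, t ^ q - y * (t ^ q) ^ q, 0)" by auto
    let ?Q = "(t, t ^ q, t ^ (q ^ 2))"
    have "?Q \<noteq> (0, 0, 0)" "pt ?Q \<in> subplane q" using t unfolding subplane_def by auto
    moreover have "cross3 (cross3 (x, y, 1) ?Q) mT = (t - x * (t ^ q) ^ q, t ^ q - y * (t ^ q) ^ q, 0)"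
      by (simp add: cross3_def mT_def pow_sq algebra_simps)
    ultimately show "X \<in> proj_set q (x, y, 1)" unfolding proj_set_def using t by force
  qed
qed

lemma Fig_iff: "pt ((x::'a), y, 1) \<in> Fig q Tpt \<longleftrightarrow> (\<exists>d e. nrm q d + nrm q e \<noteq> 0 \<and>
   pt (x, y, 1) = pt (d ^ q * (d ^ q) ^ q, e ^ q * (e ^ q) ^ q, - (d ^ q * (e ^ q) ^ q)))"
proof -
  have E: "pt ((x::'a), y, 1) \<notin> E_blk q Tpt"
  proof
    assume "pt (x, y, 1) \<in> E_blk q Tpt"
    then obtain w where w: "pt (x, y, 1) = pt w" "dot3 (cross3 (phi q Tpt) (phi q (phi q Tpt))) w = 0"
      unfolding E_blk_def by auto
    obtain a b d where wd: "w = (a, b, d)" by (cases w)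
    have "d = 0" using w(2) wd by (simp add: cross3_def phi_def Tpt_def dot3_def)
    then show False using pt_eqD[OF w(1)] wd by auto
  qed
  have F: "pt ((x::'a), y, 1) \<in> F_blk q Tpt \<longleftrightarrow> (\<exists>d e. nrm q d + nrm q e \<noteq> 0 \<and>
   pt (x, y, 1) = pt (d ^ q * (d ^ q) ^ q, e ^ q * (e ^ q) ^ q, - (d ^ q * (e ^ q) ^ q)))"
  proof
    assume "pt (x, y, 1) \<in> F_blk q Tpt"
    then obtain l where l: "pt (x, y, 1) = pt (cross3 (phi q l) (phi q (phi q l)))"
      "typeIII_line q l" "dot3 l Tpt = 0" unfolding F_blk_def by auto
    obtain d e f where ld: "l = (d, e, f)" by (cases l)
    have f: "f = 0" using l(3) ld by (simp add: dot3_def Tpt_def)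
    have "nrm q d + nrm q e \<noteq> 0" using l(2) ld f
      by (simp add: typeIII_line_def det3_def dot3_def cross3_def phi_def nrm_def mult_ac)
    moreover have "cross3 (phi q l) (phi q (phi q l)) = (d ^ q * (d ^ q) ^ q, e ^ q * (e ^ q) ^ q, - (d ^ q * (e ^ q) ^ q))"
      using ld f by (simp add: cross3_def phi_def)
    ultimately show "\<exists>d e. nrm q d + nrm q e \<noteq> 0 \<and>
      pt (x, y, 1) = pt (d ^ q * (d ^ q) ^ q, e ^ q * (e ^ q) ^ q, - (d ^ q * (e ^ q) ^ q))"
      using l(1) by auto
  next
    assume "\<exists>d e. nrm q d + nrm q e \<noteq> 0 \<and>
      pt (x, y, 1) = pt (d ^ q * (d ^ q) ^ q, e ^ q * (e ^ q) ^ q, - (d ^ q * (e ^ q) ^ q))"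
    then obtain d e where de: "nrm q d + nrm q e \<noteq> 0"
      "pt (x, y, 1) = pt (d ^ q * (d ^ q) ^ q, e ^ q * (e ^ q) ^ q, - (d ^ q * (e ^ q) ^ q))" by auto
    let ?l = "(d, e, 0::'a)"
    have "typeIII_line q ?l" using de(1)
      by (auto simp: typeIII_line_def det3_def dot3_def cross3_def phi_def nrm_def mult_ac)
    moreover have "dot3 ?l Tpt = 0" by (simp add: dot3_def Tpt_def)
    moreover have "cross3 (phi q ?l) (phi q (phi q ?l)) = (d ^ q * (d ^ q) ^ q, e ^ q * (e ^ q) ^ q, - (d ^ q * (e ^ q) ^ q))"
      by (simp add: cross3_def phi_def)
    ultimately show "pt (x, y, 1) \<in> F_blk q Tpt" unfolding F_blk_def using de(2) by force
  qed
  show ?thesis unfolding Fig_def using E F by blast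
qed

lemma dirB:
  assumes de: "nrm q d + nrm q e \<noteq> 0"
    and P: "pt ((x::'a), y, 1) = pt (d ^ q * (d ^ q) ^ q, e ^ q * (e ^ q) ^ q, - (d ^ q * (e ^ q) ^ q))"
  shows "T_sls q (proj_set q (x, y, 1))"
proof -
  obtain c where c: "c \<noteq> 0" "(x, y, 1) = sm3 c (d ^ q * (d ^ q) ^ q, e ^ q * (e ^ q) ^ q, - (d ^ q * (e ^ q) ^ q))"
    using pt_eqD[OF P] by blast
  have c1: "1 = - (c * (d ^ q * (e ^ q) ^ q))" and xc: "x = c * (d ^ q * (d ^ q) ^ q)"
    and yc: "y = c * (e ^ q * (e ^ q) ^ q)" using c(2) by auto
  have d0: "d \<noteq> 0" and e0: "e \<noteq> 0" using c1 q0 by auto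
  have dq: "d ^ q \<noteq> 0" "(d ^ q) ^ q \<noteq> 0" and eq: "e ^ q \<noteq> 0" "(e ^ q) ^ q \<noteq> 0" using d0 e0 q0 by auto
  have c1': "c * (d ^ q * (e ^ q) ^ q) = - 1" using c1 by (metis minus_minus)
  have cc: "c = - 1 / (d ^ q * (e ^ q) ^ q)" using c1' dq eq by (simp add: field_simps)
  have xx: "x = - ((d ^ q) ^ q / (e ^ q) ^ q)" using xc cc dq eq by (simp add: field_simps)
  have yy: "y = - (e ^ q / d ^ q)" using yc cc dq eq by (simp add: field_simps)
  define sf where "sf t = d * t + e * t ^ q" for t :: 'a
  have snz: "sf t \<noteq> 0" if "t \<noteq> 0" for t
  proof
    assume "sf t = 0"
    then have "d * t = - (e * t ^ q)" unfolding sf_def by (simp add: eq_neg_iff_add_eq_0)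
    then have "nrm q (d * t) = nrm q (- (e * t ^ q))" by simp
    then have "nrm q d * nrm q t = - (nrm q e * nrm q t)" by (simp add: nrm_mult nrm_neg nrm_frob)
    then have "(nrm q d + nrm q e) * nrm q t = 0" by (simp add: algebra_simps)
    then show False using de that nrm_zero_iff by auto
  qed
  have "inj sf"
  proof (rule injI)
    fix a b assume "sf a = sf b"
    have "sf (a - b) = sf a - sf b" unfolding sf_def by (simp add: fdiff right_diff_distrib)
    then have "sf (a - b) = 0" using \<open>sf a = sf b\<close> by simp
    then show "a = b" using snz[of "a - b"] by (cases "a = b") auto
  qed
  then have surj: "surj sf" by (rule finite_UNIV_inj_surj[OF finite])
  define \<theta> where "\<theta> = d ^ q / (e ^ q) ^ q"
  have th0: "\<theta> \<noteq> 0" using dq eq by (simp add: \<theta>_def)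
  have key: "pt (t - x * (t ^ q) ^ q, t ^ q - y * (t ^ q) ^ q, 0) =
      pt ((1 / (sf t) ^ q) * \<theta>, (1 / (sf t) ^ q) ^ q, 0)" if t0: "t \<noteq> 0" for t
  proof -
    have S0: "sf t \<noteq> 0" using snz t0 by simp
    have S1: "(sf t) ^ q = d ^ q * t ^ q + e ^ q * (t ^ q) ^ q" unfolding sf_def by (simp add: fr_simps)
    have S2: "((sf t) ^ q) ^ q = (d ^ q) ^ q * (t ^ q) ^ q + (e ^ q) ^ q * t" unfolding sf_def by (simp add: fr_simps)
    have S1n: "(sf t) ^ q \<noteq> 0" and S2n: "((sf t) ^ q) ^ q \<noteq> 0" using S0 q0 by auto
    define lam where "lam = (sf t) ^ q * ((sf t) ^ q) ^ q / d ^ q"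
    have lam0: "lam \<noteq> 0" using S1n S2n dq by (simp add: lam_def)
    have "(t - x * (t ^ q) ^ q, t ^ q - y * (t ^ q) ^ q, 0::'a) =
       sm3 lam ((1 / (sf t) ^ q) * \<theta>, (1 / (sf t) ^ q) ^ q, 0)"
    proof -
      have l1: "lam * ((1 / (sf t) ^ q) * \<theta>) = ((sf t) ^ q) ^ q / (e ^ q) ^ q"
        unfolding lam_def \<theta>_def using S1n dq by simp
      have l2: "t - x * (t ^ q) ^ q = ((sf t) ^ q) ^ q / (e ^ q) ^ q"
        unfolding S2 xx using eq by (simp add: diff_divide_distrib add_divide_distrib mult.commute)
      have g: "t - x * (t ^ q) ^ q = lam * ((1 / (sf t) ^ q) * \<theta>)" using l1 l2 by simp
      have l3: "lam * (1 / (sf t) ^ q) ^ q = (sf t) ^ q / d ^ q"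
        unfolding lam_def using S2n dq by (simp add: power_divide)
      have l4: "t ^ q - y * (t ^ q) ^ q = (sf t) ^ q / d ^ q"
        unfolding S1 yy using dq by (simp add: add_divide_distrib mult.commute)
      have h: "t ^ q - y * (t ^ q) ^ q = lam * (1 / (sf t) ^ q) ^ q" using l3 l4 by simp
      show ?thesis using g h by simp
    qed
    then show ?thesis by (rule pt_eqI[OF lam0])
  qed
  have "proj_set q (x, y, 1) = S_theta q \<theta>"
  proof (rule set_eqI)
    fix X
    show "X \<in> proj_set q (x, y, 1) \<longleftrightarrow> X \<in> S_theta q \<theta>"
    proof
      assume "X \<in> proj_set q (x, y, 1)"
      then obtain t where t: "t \<noteq> 0" "X = pt (t - x * (t ^ q) ^ q, t ^ q - y * (t ^ q) ^ q, 0)"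
        unfolding projP by auto
      have "1 / (sf t) ^ q \<noteq> 0" using snz[OF t(1)] q0 by simp
      then show "X \<in> S_theta q \<theta>" unfolding S_theta_def using key[OF t(1)] t(2) by blast
    next
      assume "X \<in> S_theta q \<theta>"
      then obtain w where w: "w \<noteq> 0" "X = pt (w * \<theta>, w ^ q, 0)" unfolding S_theta_def by auto
      obtain t where t: "sf t = ((1 / w) ^ q) ^ q" using surj by (metis surjD)
      have t0: "t \<noteq> 0" using t w q0 by (auto simp: sf_def)
      have "(sf t) ^ q = 1 / w" using t by (simp add: fr_simps)
      then have "1 / (sf t) ^ q = w" by simp
      then have "X = pt (t - x * (t ^ q) ^ q, t ^ q - y * (t ^ q) ^ q, 0)" using key[OF t0] w(2) by simp
      then show "X \<in> proj_set q (x, y, 1)" unfolding projP using t0 by auto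
    qed
  qed
  then show ?thesis unfolding T_sls_def using th0 by blast
qed

lemma expand7:
  fixes c al be K :: 'a
  assumes "c * c ^ q * (c ^ q) ^ q = 1"
  shows "nrm q (c + al) - K * nrm q (1 + be * c) =
    (1 + al * al ^ q * (al ^ q) ^ q - K - K * (be * be ^ q * (be ^ q) ^ q))
    + (al ^ q * (al ^ q) ^ q - K * be) * c
    + (al * (al ^ q) ^ q - K * be ^ q) * c ^ q
    + (al * al ^ q - K * (be ^ q) ^ q) * (c ^ q) ^ q
    + ((al ^ q) ^ q - K * (be * be ^ q)) * (c * c ^ q)
    + (al ^ q - K * (be * (be ^ q) ^ q)) * (c * (c ^ q) ^ q)
    + (al - K * (be ^ q * (be ^ q) ^ q)) * (c ^ q * (c ^ q) ^ q)"
proof -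
  define c1 where "c1 = c ^ q"
  define c2 where "c2 = (c ^ q) ^ q"
  define a1 where "a1 = al ^ q"
  define a2 where "a2 = (al ^ q) ^ q"
  define b1 where "b1 = be ^ q"
  define b2 where "b2 = (be ^ q) ^ q"
  have n1: "nrm q (c + al) = (c + al) * (c1 + a1) * (c2 + a2)"
    unfolding nrm_def c1_def c2_def a1_def a2_def by (simp add: fadd)
  have n2: "nrm q (1 + be * c) = (1 + be * c) * (1 + b1 * c1) * (1 + b2 * c2)"
    unfolding nrm_def c1_def c2_def b1_def b2_def by (simp add: fadd power_mult_distrib)
  have cc: "c * c1 * c2 = 1" using assms unfolding c1_def c2_def .
  have "(c + al) * (c1 + a1) * (c2 + a2) - K * ((1 + be * c) * (1 + b1 * c1) * (1 + b2 * c2)) =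
      (c * c1 * c2 + al * a1 * a2 - K - K * (be * b1 * b2) * (c * c1 * c2))
    + (a1 * a2 - K * be) * c + (al * a2 - K * b1) * c1 + (al * a1 - K * b2) * c2
    + (a2 - K * (be * b1)) * (c * c1) + (a1 - K * (be * b2)) * (c * c2)
    + (al - K * (b1 * b2)) * (c1 * c2)" by (simp add: algebra_simps)
  then have "nrm q (c + al) - K * nrm q (1 + be * c) =
      (1 + al * a1 * a2 - K - K * (be * b1 * b2))
    + (a1 * a2 - K * be) * c + (al * a2 - K * b1) * c1 + (al * a1 - K * b2) * c2
    + (a2 - K * (be * b1)) * (c * c1) + (a1 - K * (be * b2)) * (c * c2)
    + (al - K * (b1 * b2)) * (c1 * c2)" unfolding n1 n2 cc by simp
  then show ?thesis unfolding c1_def c2_def a1_def a2_def b1_def b2_def .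
qed

lemma dirA:
  assumes th: "\<theta> \<noteq> 0" and PS: "proj_set q ((x::'a), y, 1) = S_theta q \<theta>"
    and xy: "\<not> (x = 0 \<and> y = 0)"
  shows "\<exists>d e. nrm q d + nrm q e \<noteq> 0 \<and>
   pt (x, y, 1) = pt (d ^ q * (d ^ q) ^ q, e ^ q * (e ^ q) ^ q, - (d ^ q * (e ^ q) ^ q))"
proof -
  define K where "K = nrm q \<theta>"
  define al where "al = - (x ^ q)"
  define be where "be = - ((y ^ q) ^ q)"
  have K0: "K \<noteq> 0" using th nrm_zero_iff K_def by simp
  have step1: "nrm q (t - x * (t ^ q) ^ q) = K * nrm q (t ^ q - y * (t ^ q) ^ q) \<and>
      t ^ q - y * (t ^ q) ^ q \<noteq> 0" if t0: "t \<noteq> 0" for t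
  proof -
    have "pt (t - x * (t ^ q) ^ q, t ^ q - y * (t ^ q) ^ q, 0) \<in> S_theta q \<theta>"
      unfolding PS[symmetric] projP using t0 by auto
    then obtain w where w: "w \<noteq> 0" "pt (t - x * (t ^ q) ^ q, t ^ q - y * (t ^ q) ^ q, 0) = pt (w * \<theta>, w ^ q, 0)"
      unfolding S_theta_def by auto
    obtain lam where lam: "lam \<noteq> 0" "(t - x * (t ^ q) ^ q, t ^ q - y * (t ^ q) ^ q, 0) = sm3 lam (w * \<theta>, w ^ q, 0)"
      using pt_eqD[OF w(2)] by blast
    have g: "t - x * (t ^ q) ^ q = lam * (w * \<theta>)" and h: "t ^ q - y * (t ^ q) ^ q = lam * w ^ q"
      using lam(2) by auto
    have "nrm q (t - x * (t ^ q) ^ q) = nrm q lam * nrm q w * K" unfolding g K_def by (simp add: nrm_mult)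
    moreover have "nrm q (t ^ q - y * (t ^ q) ^ q) = nrm q lam * nrm q w" unfolding h by (simp add: nrm_mult nrm_frob)
    moreover have "lam * w ^ q \<noteq> 0" using lam(1) w(1) q0 by simp
    ultimately show ?thesis using h by simp
  qed
  have step2: "nrm q (t ^ q + al * t) = K * nrm q (t + be * t ^ q) \<and> t + be * t ^ q \<noteq> 0" if t0: "t \<noteq> 0" for t
  proof -
    have e1: "(t - x * (t ^ q) ^ q) ^ q = t ^ q + al * t" unfolding al_def by (simp add: fdiff power_mult_distrib pw3)
    have e2: "((t ^ q - y * (t ^ q) ^ q) ^ q) ^ q = t + be * t ^ q" unfolding be_def by (simp add: fdiff power_mult_distrib pw3)
    have "nrm q (t - x * (t ^ q) ^ q) = nrm q (t ^ q + al * t)" using nrm_frob e1 by metis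
    moreover have "nrm q (t ^ q - y * (t ^ q) ^ q) = nrm q (t + be * t ^ q)" using nrm_frob e2 by metis
    moreover have "t + be * t ^ q \<noteq> 0" using step1[OF t0] e2[symmetric] q0 by simp
    ultimately show ?thesis using step1[OF t0] by simp
  qed
  have step3: "nrm q (c + al) = K * nrm q (1 + be * c)" if cC: "c \<in> CC" for c
  proof -
    obtain t where t: "t \<noteq> 0" "c = t ^ (q - 1)" using cC unfolding CC_def by auto
    have tq: "t ^ q = t * c" using q0 t by (simp add: power_Suc[symmetric])
    have "nrm q t * nrm q (c + al) = K * (nrm q t * nrm q (1 + be * c))"
      using step2[OF t(1)] unfolding tq by (simp add: nrm_mult[symmetric] algebra_simps)
    then show ?thesis using t(1) nrm_zero_iff by simp
  qed
  have co: "1 + al * al ^ q * (al ^ q) ^ q - K - K * (be * be ^ q * (be ^ q) ^ q) = 0 \<and>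
    al ^ q * (al ^ q) ^ q - K * be = 0 \<and> al * (al ^ q) ^ q - K * be ^ q = 0 \<and>
    al * al ^ q - K * (be ^ q) ^ q = 0 \<and> (al ^ q) ^ q - K * (be * be ^ q) = 0 \<and>
    al ^ q - K * (be * (be ^ q) ^ q) = 0 \<and> al - K * (be ^ q * (be ^ q) ^ q) = 0"
  proof (rule poly7)
    fix c assume cC: "c \<in> CC"
    have "c * c ^ q * (c ^ q) ^ q = 1" using C_norm[OF cC] unfolding nrm_def .
    from expand7[OF this, of al K be] step3[OF cC]
    show "1 + al * al ^ q * (al ^ q) ^ q - K - K * (be * be ^ q * (be ^ q) ^ q)
     + (al ^ q * (al ^ q) ^ q - K * be) * c
     + (al * (al ^ q) ^ q - K * be ^ q) * c ^ q
     + (al * al ^ q - K * (be ^ q) ^ q) * (c ^ q) ^ q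
     + ((al ^ q) ^ q - K * (be * be ^ q)) * (c * c ^ q)
     + (al ^ q - K * (be * (be ^ q) ^ q)) * (c * (c ^ q) ^ q)
     + (al - K * (be ^ q * (be ^ q) ^ q)) * (c ^ q * (c ^ q) ^ q) = 0" by simp
  qed
  have a1: "al ^ q * (al ^ q) ^ q = K * be" and a4: "(al ^ q) ^ q = K * (be * be ^ q)"
    and a5: "al ^ q = K * (be * (be ^ q) ^ q)" and a6: "al = K * (be ^ q * (be ^ q) ^ q)"
    using co by auto
  have be0: "be \<noteq> 0"
  proof
    assume "be = 0"
    then have "al = 0" using a6 q0 by simp
    then have "x = 0" "y = 0" using \<open>be = 0\<close> q0 unfolding al_def be_def by auto
    then show False using xy by simp
  qed
  have "al ^ q * (al ^ q) ^ q = K * (be * (be ^ q) ^ q) * (K * (be * be ^ q))"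
    by (subst a4, subst a5, rule refl)
  then have "K * be * (K * (be * be ^ q * (be ^ q) ^ q)) = K * be * 1"
    using a1 by (simp add: algebra_simps)
  then have Kn: "K * (be * be ^ q * (be ^ q) ^ q) = 1" using K0 be0 by simp
  have ab: "al * be = 1" using Kn unfolding a6 by (simp add: algebra_simps)
  have al0: "al \<noteq> 0" using ab by auto
  have na: "nrm q al \<noteq> - 1"
  proof
    assume "nrm q al = - 1"
    then have "nrm q (- al) = 1" by (simp add: nrm_neg)
    then have "- al \<in> CC" by (rule hilbert90)
    then obtain t where t: "t \<noteq> 0" "- al = t ^ (q - 1)" unfolding CC_def by auto
    have tq: "t ^ q = t * (- al)" using q0 t by (simp add: power_Suc[symmetric])
    have "t + be * t ^ q = t - t * (al * be)" unfolding tq by (simp add: algebra_simps)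
    also have "\<dots> = 0" using ab by simp
    finally show False using step2[OF t(1)] by simp
  qed
  have xq: "(al ^ q) ^ q = - x" unfolding al_def by (simp add: fneg pw3)
  have aq: "al ^ q = - ((x ^ q) ^ q)" unfolding al_def by (simp add: fneg)
  have "x ^ q * (y ^ q) ^ q = 1" using ab unfolding al_def be_def by simp
  then have "(x ^ q * (y ^ q) ^ q) ^ q = 1" by simp
  then have xy1: "(x ^ q) ^ q * y = 1" by (simp add: power_mult_distrib pw3)
  have aq0: "al ^ q \<noteq> 0" using al0 q0 by simp
  have cy: "- 1 / al ^ q = y"
  proof -
    have X2: "(x ^ q) ^ q \<noteq> 0" using xy1 by auto
    have "y = 1 / (x ^ q) ^ q" using xy1 X2 by (simp add: eq_divide_eq mult.commute)
    then show ?thesis unfolding aq by simp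
  qed
  have f1: "y * (al ^ q * (al ^ q) ^ q) = x" unfolding cy[symmetric] using aq0 xq by simp
  have f3: "y * (- (al ^ q)) = 1" unfolding cy[symmetric] using aq0 by simp
  have y0: "y \<noteq> 0" using f3 by auto
  have "(x, y, 1) = sm3 y (al ^ q * (al ^ q) ^ q, 1 ^ q * (1 ^ q) ^ q, - (al ^ q * (1 ^ q) ^ q))"
    by (simp only: sm3_simp power_one mult_1_right f1 f3)
  then have "pt (x, y, 1) = pt (al ^ q * (al ^ q) ^ q, 1 ^ q * (1 ^ q) ^ q, - (al ^ q * (1 ^ q) ^ q))"
    by (rule pt_eqI[OF y0])
  moreover have "nrm q al + nrm q 1 \<noteq> 0"
  proof
    assume "nrm q al + nrm q 1 = 0"
    then have "nrm q al = - 1" by (simp add: eq_neg_iff_add_eq_0)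
    then show False using na by simp
  qed
  ultimately show ?thesis by blast
qed


end


lemma proj_scale:
  assumes "c \<noteq> 0" shows "proj_set q (sm3 c (v::'a::field vec3)) = proj_set q v"
proof -
  have "pt (cross3 (cross3 (sm3 c v) Q) mT) = pt (cross3 (cross3 v Q) mT)" for Q
  proof (rule pt_eqI[OF assms])
    obtain a b d where v: "v = (a, b, d)" by (cases v)
    obtain e f g where Q: "Q = (e, f, g)" by (cases Q)
    show "cross3 (cross3 (sm3 c v) Q) mT = sm3 c (cross3 (cross3 v Q) mT)"
      unfolding v Q by (simp add: cross3_def mT_def algebra_simps)
  qed
  then show ?thesis unfolding proj_set_def by simp
qed

theorem theorem8p1:
  fixes q :: nat and P :: "'a::{finite, field} vec3"
  assumes "\<exists>p k. prime p \<and> k > 0 \<and> q = p ^ k"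
    and "card (UNIV :: 'a set) = q ^ 3"
    and "P \<noteq> (0, 0, 0)"
    and "pt P \<noteq> pt Tpt"
    and "dot3 mT P \<noteq> 0"
    and "pt P \<notin> subplane q"
  shows "pt P \<in> Fig q Tpt \<longleftrightarrow> T_sls q (proj_set q P)"
proof -
  obtain p k where pk: "prime p" "k > 0" "q = p ^ k" using assms(1) by blast
  have p2: "p \<ge> 2" using pk(1) prime_ge_2_nat by blast
  have q2: "q \<ge> 2"
  proof -
    have "p ^ 1 \<le> p ^ k" using pk(2) p2 by (intro power_increasing) auto
    then show ?thesis using p2 pk(3) by simp
  qed
  have "(of_nat p :: 'a) ^ (k * 3) = of_nat (card (UNIV :: 'a set))"
    using assms(2) pk(3) by (simp add: power_mult)
  also have "\<dots> = 0" by (rule ff_card_zero)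
  finally have p0: "(of_nat p :: 'a) = 0" by simp
  have fadd: "(a + b) ^ q = a ^ q + b ^ q" for a b :: 'a
    unfolding pk(3) by (rule frob_ppow[OF pk(1) p0])
  have pw3: "((a ^ q) ^ q) ^ q = a" for a :: 'a
  proof -
    have "((a ^ q) ^ q) ^ q = a ^ card (UNIV :: 'a set)"
      unfolding assms(2) by (simp add: power_mult[symmetric] power3_eq_cube)
    then show ?thesis using ff_pow_card by simp
  qed
  note crd = assms(2)
  obtain a b z where P: "P = (a, b, z)" by (cases P)
  have z0: "z \<noteq> 0" using assms(5) P by (simp add: dot3_def mT_def)
  define x where "x = a / z"
  define y where "y = b / z"
  have Ps: "P = sm3 z (x, y, 1)" using P z0 by (simp add: x_def y_def)
  have ptP: "pt P = pt (x, y, 1)" by (rule pt_eqI[OF z0 Ps])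
  have prP: "proj_set q P = proj_set q (x, y, 1)" unfolding Ps by (rule proj_scale[OF z0])
  have xy: "\<not> (x = 0 \<and> y = 0)"
  proof
    assume "x = 0 \<and> y = 0"
    then have "pt P = pt Tpt" unfolding ptP by (simp add: Tpt_def)
    then show False using assms(4) by simp
  qed
  show ?thesis
  proof
    assume "pt P \<in> Fig q Tpt"
    then obtain d e where "nrm q d + nrm q e \<noteq> 0"
      "pt (x, y, 1) = pt (d ^ q * (d ^ q) ^ q, e ^ q * (e ^ q) ^ q, - (d ^ q * (e ^ q) ^ q))"
      unfolding ptP Fig_iff[OF q2 fadd pw3 crd] by blast
    then have "T_sls q (proj_set q (x, y, 1))" by (rule dirB[OF q2 fadd pw3 crd])
    then show "T_sls q (proj_set q P)" unfolding prP .
  next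
    assume "T_sls q (proj_set q P)"
    then obtain \<theta> where th: "\<theta> \<noteq> 0" "proj_set q (x, y, 1) = S_theta q \<theta>"
      unfolding T_sls_def prP by blast
    have "\<exists>d e. nrm q d + nrm q e \<noteq> 0 \<and>
      pt (x, y, 1) = pt (d ^ q * (d ^ q) ^ q, e ^ q * (e ^ q) ^ q, - (d ^ q * (e ^ q) ^ q))"
      by (rule dirA[OF q2 fadd pw3 crd th xy])
    then show "pt P \<in> Fig q Tpt" unfolding ptP Fig_iff[OF q2 fadd pw3 crd] .
  qed
qed

end
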